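(* For every $M\ge0$, $\dim_{\mathbb C}I'_{(M)}\le|B^{(k,r)}_M|$, and consequently $\dim_{\mathbb K}\big(I^{(k,r)}\cap V_{(M)}\big)\le|B^{(k,r)}_M|$.
   Context: Fix integers $n\ge2$, $1\le k\le n-1$, $r\ge2$, $g=\gcd(k+1,r-1)$, $\tau=e^{2\pi\sqrt{-1}/(r-1)}$; specialization $(\ast)$: $t=u^{(r-1)/g}$, $q=\tau u^{-(k+1)/g}$; $\mathbb K$ is the field of specialized scalars (rational functions in a root of $u$), $V=\mathbb K[x_1^{\pm1},\dots,x_n^{\pm1}]$. For a Laurent polynomial $f=\sum c_\lambda x^\lambda$, $\deg f=\max\{|\lambda_i|:c_\lambda\ne0\}$; $V_{(M)}=\{f\in V:\deg f\le M\}$. $Z^{(k,r)}$ is the set of $z\in\mathbb K^n$ for which there exist distinct $i_1,\dots,i_{k+1}$ and $s_1,\dots,s_k\in\mathbb Z_{\ge0}$ with $z_{i_{a+1}}=z_{i_a}tq^{s_a}$ ($1\le a\le k$), $\sum_as_a\le r-2$, and $i_a<i_{a+1}$ whenever $s_a=0$; $I^{(k,r)}=\{f\in V:f(z)=0\ \forall z\in Z^{(k,r)}\}$. The $u=1$ limit: $I'$ is the set of $f\in\mathbb C[x_1^{\pm1},\dots,x_n^{\pm1}]$ vanishing at every $z\in\mathbb C^n$ for which there are $j_1<\dots<j_{k+1}$, $w\in\mathbb C$ and $p_a\in\{0,\dots,r-2\}$ with $z_{j_a}=\tau^{p_a}w$ ($1\le a\le k+1$); $I'_{(M)}=\{f\in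 I':\deg f\le M\}$. $P=\mathbb Z^n$, $P_M=\{\lambda:-M\le\lambda_i\le M\}$. $\rho(\lambda)$ is the unique permutation of $(\frac{n-1}2,\dots,-\frac{n-1}2)$ with $\rho(\lambda)_i>\rho(\lambda)_j$ iff $\lambda_i>\lambda_j$ or ($\lambda_i=\lambda_j$, $i<j$). $(i,j)$ is a neighborhood of type $(a,b)$ in $\lambda$ if $\rho(\lambda)_i-\rho(\lambda)_j=a-1$ and either $\lambda_i-\lambda_j\le b-1$, or $\lambda_i-\lambda_j=b$ and $j<i$. $B^{(k,r)}$: the $\lambda$ with no neighborhood of type $(k+1,r-1)$; $B^{(k,r)}_M=B^{(k,r)}\cap P_M$. *)

theory Defs
  imports Complex_Main "HOL-Library.Function_Algebras"
    "HOL-Computational_Algebra.Polynomial" "HOL-Computational_Algebra.Fraction_Field"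
begin

(* Laurent polynomials in x_0..x_{n-1} (paper: x_1..x_n) over a field 'a are represented by
   their coefficient functions  f :: (nat => int) => 'a  (exponent vector lam, lam i = 0 for i >= n),
   with finite support. *)

definition Pn :: "nat \<Rightarrow> (nat \<Rightarrow> int) set" where
  "Pn n = {lam. \<forall>i\<ge>n. lam i = 0}"

definition PM :: "nat \<Rightarrow> nat \<Rightarrow> (nat \<Rightarrow> int) set" where
  "PM n M = {lam. lam \<in> Pn n \<and> (\<forall>i<n. - int M \<le> lam i \<and> lam i \<le> int M)}"

definition LV :: "nat \<Rightarrow> ((nat \<Rightarrow> int) \<Rightarrow> 'a::zero) set" where
  "LV n = {f. finite {lam. f lam \<noteq> 0} \<and> (\<forall>lam. f lam \<noteq> 0 \<longrightarrow> lam \<in> Pn n)}"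

definition VM :: "nat \<Rightarrow> nat \<Rightarrow> ((nat \<Rightarrow> int) \<Rightarrow> 'a::zero) set" where
  "VM n M = {f. f \<in> LV n \<and> (\<forall>lam. f lam \<noteq> 0 \<longrightarrow> lam \<in> PM n M)}"

definition lpeval :: "nat \<Rightarrow> ((nat \<Rightarrow> int) \<Rightarrow> 'a::field) \<Rightarrow> (nat \<Rightarrow> 'a) \<Rightarrow> 'a" where
  "lpeval n f z = (\<Sum>lam \<in> {lam. f lam \<noteq> 0}. f lam * (\<Prod>i<n. z i powi lam i))"

definition fdim :: "((nat \<Rightarrow> int) \<Rightarrow> 'a::field) set \<Rightarrow> nat" where
  "fdim S = vector_space.dim (\<lambda>c f. \<lambda>x. c * f x) S"

definition tau :: "nat \<Rightarrow> complex" where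
  "tau r = cis (2 * pi / real (r - 1))"

(* The field K: rational functions C(v) in an indeterminate v, where u = v^N
   (v a root of u).  *)
type_synonym K = "complex poly fract"

definition uK :: "nat \<Rightarrow> K" where
  "uK N = Fract (monom 1 N) 1"

definition tK :: "nat \<Rightarrow> nat \<Rightarrow> nat \<Rightarrow> K" where
  "tK N k r = uK N ^ ((r - 1) div gcd (k + 1) (r - 1))"

definition qK :: "nat \<Rightarrow> nat \<Rightarrow> nat \<Rightarrow> K" where
  "qK N k r = Fract [:tau r:] 1 * inverse (uK N ^ ((k + 1) div gcd (k + 1) (r - 1)))"

(* Z^(k,r); points with all coordinates nonzero (Laurent polynomials are evaluated on the torus) *)
definition Zkr :: "nat \<Rightarrow> nat \<Rightarrow> nat \<Rightarrow> 'a::field \<Rightarrow> 'a \<Rightarrow> (nat \<Rightarrow> 'a) set" where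
  "Zkr n k r t q = {z. (\<forall>i<n. z i \<noteq> 0) \<and>
     (\<exists>is s. length is = k + 1 \<and> distinct is \<and> set is \<subseteq> {..<n} \<and> length s = k \<and>
        sum_list s \<le> r - 2 \<and>
        (\<forall>a<k. z (is ! (a + 1)) = z (is ! a) * t * q ^ (s ! a) \<and>
               (s ! a = 0 \<longrightarrow> is ! a < is ! (a + 1))))}"

definition Ikr :: "nat \<Rightarrow> nat \<Rightarrow> nat \<Rightarrow> nat \<Rightarrow> ((nat \<Rightarrow> int) \<Rightarrow> K) set" where
  "Ikr N n k r = {f \<in> LV n. \<forall>z \<in> Zkr n k r (tK N k r) (qK N k r). lpeval n f z = 0}"

(* the u = 1 limit *)
definition Zprime :: "nat \<Rightarrow> nat \<Rightarrow> nat \<Rightarrow> (nat \<Rightarrow> complex) set" where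
  "Zprime n k r = {z. (\<forall>i<n. z i \<noteq> 0) \<and>
     (\<exists>js w p. length js = k + 1 \<and> sorted_wrt (<) js \<and> set js \<subseteq> {..<n} \<and>
        length p = k + 1 \<and>
        (\<forall>a<k + 1. p ! a \<le> r - 2 \<and> z (js ! a) = tau r ^ (p ! a) * w))}"

definition Iprime :: "nat \<Rightarrow> nat \<Rightarrow> nat \<Rightarrow> ((nat \<Rightarrow> int) \<Rightarrow> complex) set" where
  "Iprime n k r = {f \<in> LV n. \<forall>z \<in> Zprime n k r. lpeval n f z = 0}"

definition rk :: "nat \<Rightarrow> (nat \<Rightarrow> int) \<Rightarrow> nat \<Rightarrow> nat" where
  "rk n lam i = card {j. j < n \<and> (lam j > lam i \<or> (lam j = lam i \<and> j < i))}"

definition rho :: "nat \<Rightarrow> (nat \<Rightarrow> int) \<Rightarrow> nat \<Rightarrow> rat" where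
  "rho n lam i = of_nat (n - 1) / 2 - of_nat (rk n lam i)"

definition nbhd :: "nat \<Rightarrow> (nat \<Rightarrow> int) \<Rightarrow> nat \<Rightarrow> nat \<Rightarrow> int \<Rightarrow> int \<Rightarrow> bool" where
  "nbhd n lam i j a b \<longleftrightarrow> i < n \<and> j < n \<and> rho n lam i - rho n lam j = of_int (a - 1) \<and>
     (lam i - lam j \<le> b - 1 \<or> (lam i - lam j = b \<and> j < i))"

definition Bkr :: "nat \<Rightarrow> nat \<Rightarrow> nat \<Rightarrow> (nat \<Rightarrow> int) set" where
  "Bkr n k r = {lam \<in> Pn n. \<not> (\<exists>i j. nbhd n lam i j (int k + 1) (int r - 1))}"

definition BkrM :: "nat \<Rightarrow> nat \<Rightarrow> nat \<Rightarrow> nat \<Rightarrow> (nat \<Rightarrow> int) set" where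
  "BkrM n k r M = Bkr n k r \<inter> PM n M"

end

theory Submission
  imports Defs "HOL-Library.FuncSet"
begin


lemma fv_vs: "vector_space ((\<lambda>c f x. c * f x) :: 'a::field \<Rightarrow> ('b \<Rightarrow> 'a) \<Rightarrow> ('b \<Rightarrow> 'a))"
  by unfold_locales (auto simp: fun_eq_iff algebra_simps)

lemma sum_fun_app: "finite A \<Longrightarrow> (\<Sum>l\<in>A. g l) x = (\<Sum>l\<in>A. g l x)"
  for g :: "'c \<Rightarrow> 'b \<Rightarrow> 'a::comm_monoid_add"
  by (induction A rule: finite_induct) (auto simp: plus_fun_def zero_fun_def)

lemma fdim_bound:
  fixes S :: "((nat \<Rightarrow> int) \<Rightarrow> 'a::field) set" and B :: "(nat \<Rightarrow> int) set"
  assumes add: "\<And>f g. f \<in> S \<Longrightarrow> g \<in> S \<Longrightarrow> (\<lambda>x. f x + g x) \<in> S"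
    and scl: "\<And>c f. f \<in> S \<Longrightarrow> (\<lambda>x. c * f x) \<in> S"
    and zero: "(\<lambda>x. 0) \<in> S"
    and inj: "\<And>f. f \<in> S \<Longrightarrow> (\<forall>l\<in>B. f l = 0) \<Longrightarrow> f = (\<lambda>x. 0)"
    and finB: "finite B"
  shows "fdim S \<le> card B"
proof -
  let ?s = "(\<lambda>c f x. c * f x) :: 'a \<Rightarrow> ((nat \<Rightarrow> int) \<Rightarrow> 'a) \<Rightarrow> ((nat \<Rightarrow> int) \<Rightarrow> 'a)"
  interpret V: vector_space ?s by (rule fv_vs)
  interpret VP: vector_space_pair ?s ?s by unfold_locales
  have sub: "V.subspace S"
    unfolding V.subspace_def using add scl zero by (auto simp: plus_fun_def zero_fun_def)
  then have spanS: "V.span S = S" by simp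
  obtain B0 where B0: "B0 \<subseteq> S" "V.independent B0" "S \<subseteq> V.span B0" "card B0 = V.dim S"
    using V.basis_exists by blast
  define P where "P = (\<lambda>f::(nat \<Rightarrow> int) \<Rightarrow> 'a. \<lambda>l. if l \<in> B then f l else 0)"
  have linP: "Vector_Spaces.linear ?s ?s P"
    unfolding Vector_Spaces.linear_iff P_def
    using fv_vs by (auto simp: fun_eq_iff plus_fun_def)
  have spB0: "V.span B0 \<subseteq> S"
    using B0(1) V.span_mono spanS by blast
  have injP: "inj_on P (V.span B0)"
  proof (rule inj_onI)
    fix f g assume f: "f \<in> V.span B0" and g: "g \<in> V.span B0" and e: "P f = P g"
    have "(\<lambda>x. f x + (-1) * g x) \<in> S" using add scl f g spB0 by blast
    moreover have "\<forall>l\<in>B. f l + (-1) * g l = 0" using e unfolding P_def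
      by (metis (mono_tags) add_neg_numeral_special(8) mult_minus1 right_minus)
    ultimately have "(\<lambda>x. f x + (-1) * g x) = (\<lambda>x. 0)" using inj by blast
    then show "f = g" by (auto simp: fun_eq_iff dest: fun_cong)
  qed
  have indP: "V.independent (P ` B0)"
    using VP.linear_independent_injective_image[OF linP B0(2) injP] .
  define ind where "ind = (\<lambda>l::nat\<Rightarrow>int. \<lambda>m::nat\<Rightarrow>int. if m = l then (1::'a) else 0)"
  have "P ` B0 \<subseteq> V.span (ind ` B)"
  proof
    fix h assume "h \<in> P ` B0"
    then obtain f where h: "h = P f" by blast
    have "P f = (\<Sum>l\<in>B. ?s (f l) (ind l))"
    proof
      fix m
      have "(\<Sum>l\<in>B. ?s (f l) (ind l)) m = (\<Sum>l\<in>B. (if m = l then f l else 0))"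
        by (simp add: sum_fun_app[OF finB] ind_def if_distrib cong: if_cong)
      also have "\<dots> = P f m" using finB by (simp add: P_def)
      finally show "P f m = (\<Sum>l\<in>B. ?s (f l) (ind l)) m" by simp
    qed
    also have "\<dots> \<in> V.span (ind ` B)"
      by (intro V.span_sum V.span_scale V.span_base) auto
    finally show "h \<in> V.span (ind ` B)" using h by simp
  qed
  then have "card (P ` B0) \<le> card (ind ` B)"
    using V.independent_span_bound[OF finite_imageI[OF finB] indP] by blast
  also have "\<dots> \<le> card B" using finB card_image_le by blast
  finally have c1: "card (P ` B0) \<le> card B" .
  have "card (P ` B0) = card B0"
    using injP V.span_superset by (intro card_image) (meson inj_on_subset)
  then show ?thesis using c1 B0(4) unfolding fdim_def by simp
qed




lemma univ_vanish:
  fixes b :: "int \<Rightarrow> complex" and D :: "int set"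
  assumes finD: "finite D" and van: "\<And>t. t \<noteq> 0 \<Longrightarrow> (\<Sum>d\<in>D. b d * t powi d) = 0"
    and dD: "d \<in> D"
  shows "b d = 0"
proof -
  define d0 where "d0 = Min D"
  have d0le: "\<And>d'. d' \<in> D \<Longrightarrow> d0 \<le> d'" using finD d0_def by auto
  define p where "p = (\<Sum>d'\<in>D. monom (b d') (nat (d' - d0)))"
  have pz: "poly p t = 0" if t: "t \<noteq> 0" for t
  proof -
    have "poly p t = (\<Sum>d'\<in>D. b d' * t ^ nat (d' - d0))"
      by (simp add: p_def poly_sum poly_monom)
    also have "\<dots> = (\<Sum>d'\<in>D. b d' * (t powi d' * t powi (- d0)))"
    proof (rule sum.cong[OF refl])
      fix d' assume "d' \<in> D"
      then have "d' - d0 = int (nat (d' - d0))" using d0le by simp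
      then have "t ^ nat (d' - d0) = t powi (d' - d0)"
        by (metis power_int_of_nat)
      also have "\<dots> = t powi d' * t powi (- d0)" using t by (simp add: power_int_add[symmetric])
      finally show "b d' * t ^ nat (d' - d0) = b d' * (t powi d' * t powi (- d0))" by simp
    qed
    also have "\<dots> = (\<Sum>d'\<in>D. b d' * t powi d') * t powi (- d0)"
      by (simp add: sum_distrib_right mult.assoc)
    also have "\<dots> = 0" using van[OF t] by simp
    finally show ?thesis .
  qed
  have "p = 0"
  proof (rule ccontr)
    assume "p \<noteq> 0"
    then have "finite {x. poly p x = 0}" by (rule poly_roots_finite)
    moreover have "UNIV - {0} \<subseteq> {x. poly p x = 0}" using pz by auto
    ultimately have "finite (UNIV - {0::complex})" by (rule finite_subset[rotated])
    then show False by (simp add: infinite_UNIV_char_0)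
  qed
  have "coeff p (nat (d - d0)) = (\<Sum>d'\<in>D. if d' = d then b d' else 0)"
    unfolding p_def coeff_sum coeff_monom
  proof (rule sum.cong[OF refl])
    fix d' assume "d' \<in> D"
    have "nat (d' - d0) = nat (d - d0) \<longleftrightarrow> d' = d"
      using d0le[OF \<open>d' \<in> D\<close>] d0le[OF dD] by (simp add: nat_eq_iff)
    then show "(if nat (d' - d0) = nat (d - d0) then b d' else 0) = (if d' = d then b d' else 0)"
      by simp
  qed
  also have "\<dots> = b d" using finD dD by simp
  finally show ?thesis using \<open>p = 0\<close> by simp
qed

lemma multi_vanish:
  fixes c :: "'b \<Rightarrow> complex" and \<phi> :: "'b \<Rightarrow> nat \<Rightarrow> int"
  assumes "finite A"
    and "\<And>y. (\<forall>l<n. y l \<noteq> 0) \<Longrightarrow> (\<Sum>x\<in>A. c x * (\<Prod>l<n. y l powi \<phi> x l)) = 0"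
  shows "(\<Sum>x\<in>{x\<in>A. \<forall>l<n. \<phi> x l = e l}. c x) = 0"
  using assms
proof (induction n arbitrary: A)
  case 0
  then show ?case by simp
next
  case (Suc n)
  define A' where "A' = {x\<in>A. \<phi> x n = e n}"
  have finA': "finite A'" using Suc.prems(1) A'_def by simp
  have hyp': "(\<Sum>x\<in>A'. c x * (\<Prod>l<n. y l powi \<phi> x l)) = 0" if y: "\<forall>l<n. y l \<noteq> 0" for y
  proof -
    define b where "b d = (\<Sum>x\<in>{x\<in>A. \<phi> x n = d}. c x * (\<Prod>l<n. y l powi \<phi> x l))" for d
    define D where "D = (\<lambda>x. \<phi> x n) ` A"
    have finD: "finite D" using Suc.prems(1) D_def by simp
    have van: "(\<Sum>d\<in>D. b d * t powi d) = 0" if t: "t \<noteq> 0" for t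
    proof -
      have y': "\<forall>l<Suc n. (y(n := t)) l \<noteq> 0" using y t by auto
      have "0 = (\<Sum>x\<in>A. c x * (\<Prod>l<Suc n. (y(n := t)) l powi \<phi> x l))"
        using Suc.prems(2)[OF y'] by simp
      also have "\<dots> = (\<Sum>x\<in>A. c x * (\<Prod>l<n. y l powi \<phi> x l) * t powi \<phi> x n)"
        by (intro sum.cong refl) (simp add: mult.assoc)
      also have "\<dots> = (\<Sum>d\<in>D. \<Sum>x\<in>{x\<in>A. \<phi> x n = d}. c x * (\<Prod>l<n. y l powi \<phi> x l) * t powi \<phi> x n)"
        unfolding D_def by (rule sum.image_gen[OF Suc.prems(1)])
      also have "\<dots> = (\<Sum>d\<in>D. b d * t powi d)"
        unfolding b_def by (intro sum.cong refl) (auto simp: sum_distrib_right)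
      finally show ?thesis by simp
    qed
    show ?thesis
    proof (cases "e n \<in> D")
      case True
      have "b (e n) = 0" by (rule univ_vanish[OF finD van True])
      then show ?thesis by (simp add: b_def A'_def)
    next
      case False
      then have "A' = {}" unfolding A'_def D_def by force
      then show ?thesis by simp
    qed
  qed
  have "(\<Sum>x\<in>{x\<in>A'. \<forall>l<n. \<phi> x l = e l}. c x) = 0"
    using Suc.IH[OF finA' hyp'] by blast
  moreover have "{x\<in>A'. \<forall>l<n. \<phi> x l = e l} = {x\<in>A. \<forall>l<Suc n. \<phi> x l = e l}"
    unfolding A'_def using less_Suc_eq by auto
  ultimately show ?case by simp
qed




lemma lpeval_superset:
  assumes "finite A" "{l. f l \<noteq> 0} \<subseteq> A"
  shows "lpeval n f z = (\<Sum>x\<in>A. f x * (\<Prod>i<n. z i powi x i))"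
  unfolding lpeval_def using assms by (intro sum.mono_neutral_left) auto

lemma tau_nz: "tau r \<noteq> 0" by (simp add: tau_def)

lemma char_sum:
  fixes r :: nat and d :: int
  assumes r: "r \<ge> 2"
  shows "(\<Sum>q<r-1. tau r powi (int q * d)) = (if int (r-1) dvd d then of_nat (r-1) else 0)"
proof -
  define m where "m = r - 1"
  have m0: "m > 0" using r m_def by simp
  define z where "z = tau r powi d"
  have pw: "tau r powi (int q * d) = z ^ q" for q
    by (metis z_def mult.commute power_int_mult power_int_of_nat)
  have zc: "z = cis (real_of_int d * (2 * pi / real m))"
    by (simp add: z_def tau_def cis_power_int m_def)
  show ?thesis
  proof (cases "int m dvd d")
    case True
    then obtain k where k: "d = int m * k" by blast
    have "z = cis (2 * pi * real_of_int k)"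
      using m0 by (simp add: zc k field_simps)
    also have "\<dots> = 1" by (simp add: cis_multiple_2pi)
    finally have "z = 1" .
    then show ?thesis using True unfolding m_def[symmetric] by (simp add: pw)
  next
    case False
    have zn1: "z \<noteq> 1"
    proof
      assume "z = 1"
      then have "cos (real_of_int d * (2 * pi / real m)) = 1"
        using zc by (metis Re_complex_of_real cis.sel(1) of_real_1)
      then obtain x where x: "real_of_int d * (2 * pi / real m) = real_of_int x * 2 * pi"
        using cos_one_2pi_int by blast
      then have "real_of_int d = real_of_int x * real m" using m0 by (simp add: field_simps)
      then have "d = x * int m" by (metis of_int_eq_iff of_int_mult of_int_of_nat_eq)
      then show False using False by simp
    qed
    have "z ^ m = cis (real m * (real_of_int d * (2 * pi / real m)))"
      by (simp add: zc DeMoivre)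
    also have "\<dots> = cis (2 * pi * real_of_int d)" using m0 by (simp add: field_simps)
    also have "\<dots> = 1" by (simp add: cis_multiple_2pi)
    finally have zm: "z ^ m = 1" .
    have "(\<Sum>q<m. z ^ q) = 0" using geometric_sum[OF zn1, of m] zm by simp
    then show ?thesis using False unfolding m_def[symmetric] by (simp add: pw)
  qed
qed




definition phiI :: "nat set \<Rightarrow> nat \<Rightarrow> (nat \<Rightarrow> int) \<Rightarrow> nat \<Rightarrow> int" where
  "phiI I i0 x l = (if l \<in> I then (if l = i0 then (\<Sum>l'\<in>I. x l') else 0) else x l)"

lemma power_int_sum_exp:
  fixes w :: "'a::field"
  assumes "w \<noteq> 0" "finite I"
  shows "(\<Prod>i\<in>I. w powi g i) = w powi (\<Sum>i\<in>I. g i)"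
  using assms(2)
proof (induction I rule: finite_induct)
  case empty then show ?case by simp
next
  case (insert a F)
  then show ?case by (simp add: power_int_add assms(1))
qed

lemma zprime_point:
  fixes r :: nat and w :: complex
  assumes r: "r \<ge> 2" and I: "I \<subseteq> {..<n}" "card I \<ge> k + 1"
    and p: "p \<in> PiE I (\<lambda>_. {..<r-1})" and w: "w \<noteq> 0" and y: "\<forall>l<n. y l \<noteq> 0"
  shows "(\<lambda>l. if l \<in> I then tau r ^ p l * w else y l) \<in> Zprime n k r"
proof -
  have finI: "finite I" using I(1) finite_subset by blast
  define js where "js = take (k+1) (sorted_list_of_set I)"
  have ljs: "length js = k + 1" using I(2) finI by (simp add: js_def)
  have sjs: "sorted_wrt (<) js" unfolding js_def by (intro sorted_wrt_take strict_sorted_list_of_set)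
  have "set js \<subseteq> set (sorted_list_of_set I)" unfolding js_def by (rule set_take_subset)
  then have setjs: "set js \<subseteq> I" using finI by simp
  have c1: "\<forall>i<n. (if i \<in> I then tau r ^ p i * w else y i) \<noteq> 0" using w y tau_nz by auto
  have c2: "set js \<subseteq> {..<n}" using setjs I(1) by blast
  have c3: "length (map p js) = k + 1" using ljs by simp
  have c4: "\<forall>a<k + 1. map p js ! a \<le> r - 2 \<and>
        (if js ! a \<in> I then tau r ^ p (js ! a) * w else y (js ! a)) = tau r ^ (map p js ! a) * w"
  proof (intro allI impI conjI)
    fix a assume a: "a < k + 1"
    then have "js ! a \<in> set js" using ljs by simp
    then have ja: "js ! a \<in> I" using setjs by blast
    then have "p (js ! a) < r - 1" using p unfolding PiE_iff by blast
    then show "map p js ! a \<le> r - 2" using a ljs by simp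
    show "(if js ! a \<in> I then tau r ^ p (js ! a) * w else y (js ! a)) = tau r ^ (map p js ! a) * w"
      using ja a ljs by simp
  qed
  show ?thesis unfolding Zprime_def mem_Collect_eq
    apply (rule conjI[OF c1])
    apply (rule exI[of _ js], rule exI[of _ w], rule exI[of _ "map p js"])
    using c2 c3 c4 ljs sjs by simp
qed

lemma prod_split_eval:
  fixes r :: nat and w :: complex
  assumes I: "I \<subseteq> {..<n}" "i0 \<in> I" and y: "y i0 \<noteq> 0"
  shows "(\<Prod>i<n. (if i \<in> I then tau r ^ p i * y i0 else y i) powi x i)
       = (\<Prod>l\<in>I. tau r powi (int (p l) * x l)) * (\<Prod>i<n. y i powi phiI I i0 x i)"
proof -
  have finI: "finite I" using I(1) finite_subset by blast
  have "(\<Prod>i<n. (if i \<in> I then tau r ^ p i * y i0 else y i) powi x i)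
      = (\<Prod>i\<in>I. (tau r ^ p i * y i0) powi x i) * (\<Prod>i\<in>{..<n}-I. y i powi x i)"
    using prod.subset_diff[OF I(1), of "\<lambda>i. (if i \<in> I then tau r ^ p i * y i0 else y i) powi x i"]
    by (simp add: mult.commute)
  also have "(\<Prod>i\<in>I. (tau r ^ p i * y i0) powi x i)
      = (\<Prod>l\<in>I. tau r powi (int (p l) * x l)) * (\<Prod>i\<in>I. y i0 powi x i)"
    by (simp add: power_int_mult_distrib prod.distrib power_int_mult power_int_of_nat[symmetric]
          del: power_int_of_nat)
  also have "(\<Prod>i\<in>I. y i0 powi x i) = y i0 powi (\<Sum>i\<in>I. x i)"
    by (rule power_int_sum_exp[OF y finI])
  also have "\<dots> = (\<Prod>i\<in>I. (if i = i0 then y i0 powi (\<Sum>i\<in>I. x i) else 1))"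
    using finI I(2) by simp
  also have "\<dots> = (\<Prod>i\<in>I. y i powi phiI I i0 x i)"
    by (intro prod.cong refl) (simp add: phiI_def)
  finally have e1: "(\<Prod>i<n. (if i \<in> I then tau r ^ p i * y i0 else y i) powi x i)
     = (\<Prod>l\<in>I. tau r powi (int (p l) * x l)) * (\<Prod>i\<in>I. y i powi phiI I i0 x i) * (\<Prod>i\<in>{..<n}-I. y i powi x i)" .
  have e2: "(\<Prod>i\<in>{..<n}-I. y i powi x i) = (\<Prod>i\<in>{..<n}-I. y i powi phiI I i0 x i)"
    by (intro prod.cong refl) (simp add: phiI_def)
  have e3: "(\<Prod>i\<in>I. y i powi phiI I i0 x i) * (\<Prod>i\<in>{..<n}-I. y i powi phiI I i0 x i)
      = (\<Prod>i<n. y i powi phiI I i0 x i)"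
    using prod.subset_diff[OF I(1), of "\<lambda>i. y i powi phiI I i0 x i"] by (simp add: mult.commute)
  show ?thesis using e1 e2 e3 by (simp add: mult.assoc)
qed


lemma prod_if_all:
  assumes "finite I"
  shows "(\<Prod>l\<in>I. if P l then (a::'a::comm_semiring_1) else 0) = (if \<forall>l\<in>I. P l then a ^ card I else 0)"
  using assms by (induction I rule: finite_induct) auto

lemma iprime_eq:
  fixes f :: "(nat \<Rightarrow> int) \<Rightarrow> complex" and lam :: "nat \<Rightarrow> int"
  assumes r: "r \<ge> 2" and f: "f \<in> Iprime n k r" and I: "I \<subseteq> {..<n}" "card I \<ge> k+1" "i0 \<in> I"
  shows "(\<Sum>x\<in>{x. f x \<noteq> 0 \<and> (\<forall>l\<in>I. int (r-1) dvd (x l - lam l)) \<and> (\<forall>l<n. phiI I i0 x l = phiI I i0 lam l)}. f x) = 0"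
proof -
  define A where "A = {x. f x \<noteq> 0}"
  have finA: "finite A" using f unfolding A_def Iprime_def LV_def by auto
  have finI: "finite I" using I(1) finite_subset by blast
  define m where "m = r - 1"
  have m0: "m > 0" using r m_def by simp
  define P where "P = PiE I (\<lambda>_. {..<m})"
  have finP: "finite P" unfolding P_def using finI by (simp add: finite_PiE)
  define cg where "cg x = (if \<forall>l\<in>I. int m dvd (x l - lam l) then (of_nat m :: complex) ^ card I else 0)" for x
  define c where "c x = f x * cg x" for x
  have key: "(\<Sum>x\<in>A. c x * (\<Prod>l<n. y l powi phiI I i0 x l)) = 0" if y: "\<forall>l<n. y l \<noteq> 0" for y
  proof -
    define R where "R x = (\<Prod>l<n. y l powi phiI I i0 x l)" for x
    define T where "T p x = (\<Prod>l\<in>I. tau r powi (int (p l) * x l))" for p :: "nat \<Rightarrow> nat" and x :: "nat \<Rightarrow> int"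
    define Ep where "Ep p = (\<Prod>l\<in>I. tau r powi (- (int (p l) * lam l)))" for p :: "nat \<Rightarrow> nat"
    have yi0: "y i0 \<noteq> 0" using y I by auto
    have ev: "(\<Sum>x\<in>A. f x * (T p x * R x)) = 0" if p: "p \<in> P" for p
    proof -
      have z: "(\<lambda>l. if l \<in> I then tau r ^ p l * y i0 else y l) \<in> Zprime n k r"
        using zprime_point[OF r I(1) I(2) _ yi0 y] p unfolding P_def m_def by blast
      then have "lpeval n f (\<lambda>l. if l \<in> I then tau r ^ p l * y i0 else y l) = 0"
        using f unfolding Iprime_def by blast
      then show ?thesis unfolding lpeval_def A_def[symmetric] T_def R_def
        using prod_split_eval[of I n i0 y, OF I(1) I(3) yi0] by simp
    qed
    have ET: "Ep p * T p x = (\<Prod>l\<in>I. tau r powi (int (p l) * (x l - lam l)))" for p x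
      unfolding Ep_def T_def prod.distrib[symmetric]
      by (intro prod.cong refl) (simp add: power_int_add[symmetric] tau_nz algebra_simps)
    have sumP: "(\<Sum>p\<in>P. Ep p * T p x) = cg x" for x
    proof -
      have "(\<Sum>p\<in>P. Ep p * T p x) = (\<Sum>p\<in>P. \<Prod>l\<in>I. tau r powi (int (p l) * (x l - lam l)))"
        using ET by simp
      also have "\<dots> = (\<Prod>l\<in>I. \<Sum>q<m. tau r powi (int q * (x l - lam l)))"
        unfolding P_def by (rule prod_sum_PiE[symmetric]) (use finI in auto)
      also have "\<dots> = (\<Prod>l\<in>I. if int m dvd (x l - lam l) then of_nat m else 0)"
        unfolding m_def using char_sum[OF r] by simp
      also have "\<dots> = cg x" unfolding cg_def by (rule prod_if_all[OF finI])
      finally show ?thesis .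
    qed
    have "0 = (\<Sum>p\<in>P. Ep p * (\<Sum>x\<in>A. f x * (T p x * R x)))" using ev by simp
    also have "\<dots> = (\<Sum>p\<in>P. \<Sum>x\<in>A. f x * R x * (Ep p * T p x))"
      by (simp add: sum_distrib_left algebra_simps)
    also have "\<dots> = (\<Sum>x\<in>A. \<Sum>p\<in>P. f x * R x * (Ep p * T p x))"
      by (rule sum.swap)
    also have "\<dots> = (\<Sum>x\<in>A. f x * R x * cg x)"
      by (simp add: sum_distrib_left[symmetric] sumP)
    also have "\<dots> = (\<Sum>x\<in>A. c x * (\<Prod>l<n. y l powi phiI I i0 x l))"
      by (simp add: c_def R_def algebra_simps)
    finally show ?thesis by simp
  qed
  have "(\<Sum>x\<in>{x\<in>A. \<forall>l<n. phiI I i0 x l = phiI I i0 lam l}. c x) = 0"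
    by (rule multi_vanish[OF finA key]) simp
  moreover have "(\<Sum>x\<in>{x\<in>A. \<forall>l<n. phiI I i0 x l = phiI I i0 lam l}. c x)
     = (of_nat m) ^ card I * (\<Sum>x\<in>{x. f x \<noteq> 0 \<and> (\<forall>l\<in>I. int (r-1) dvd (x l - lam l)) \<and> (\<forall>l<n. phiI I i0 x l = phiI I i0 lam l)}. f x)"
  proof -
    have fin2: "finite {x\<in>A. \<forall>l<n. phiI I i0 x l = phiI I i0 lam l}" using finA by simp
    have "(\<Sum>x\<in>{x\<in>A. \<forall>l<n. phiI I i0 x l = phiI I i0 lam l}. c x)
       = (\<Sum>x\<in>{x\<in>A. \<forall>l<n. phiI I i0 x l = phiI I i0 lam l}. if \<forall>l\<in>I. int m dvd (x l - lam l) then (of_nat m) ^ card I * f x else 0)"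
      by (intro sum.cong refl) (simp add: c_def cg_def)
    also have "\<dots> = (\<Sum>x\<in>{x\<in>{x\<in>A. \<forall>l<n. phiI I i0 x l = phiI I i0 lam l}. \<forall>l\<in>I. int m dvd (x l - lam l)}. (of_nat m) ^ card I * f x)"
      by (rule sum.inter_filter[OF fin2, symmetric])
    also have "{x\<in>{x\<in>A. \<forall>l<n. phiI I i0 x l = phiI I i0 lam l}. \<forall>l\<in>I. int m dvd (x l - lam l)}
       = {x. f x \<noteq> 0 \<and> (\<forall>l\<in>I. int (r-1) dvd (x l - lam l)) \<and> (\<forall>l<n. phiI I i0 x l = phiI I i0 lam l)}"
      unfolding A_def m_def by blast
    finally show ?thesis by (simp add: sum_distrib_left)
  qed
  ultimately show ?thesis using m0 by simp
qed




lemma percoord: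
  fixes m a y :: int
  assumes m: "m > 0" and a: "0 \<le> a" "a \<le> m" and d: "m dvd (y - a)"
  shows "a * (a - m) \<le> y * (y - m)"
    and "y * (y - m) = a * (a - m) \<Longrightarrow> y = a \<or> (a = 0 \<and> y = m) \<or> (a = m \<and> y = 0)"
proof -
  obtain t where t: "y = a + m * t" using d by (metis add.commute dvdE diff_eq_eq)
  have id: "y * (y - m) - a * (a - m) = (m * t) * (2 * a + m * (t - 1))" unfolding t by algebra
  have nn: "(m * t) * (2 * a + m * (t - 1)) \<ge> 0"
  proof (cases "t \<ge> 1")
    case True
    then have "m * t \<ge> 0" "2 * a + m * (t - 1) \<ge> 0" using m a by auto
    then show ?thesis by simp
  next
    case False
    show ?thesis
    proof (cases "t = 0")
      case True then show ?thesis by simp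
    next
      case False2: False
      then have tn: "t \<le> -1" using False by simp
      have "m * t \<le> 0" using m tn by (simp add: mult_nonneg_nonpos)
      moreover have "m * (t - 1) \<le> m * (-2)" using m tn by (intro mult_left_mono) auto
      then have "2 * a + m * (t - 1) \<le> 0" using a by simp
      ultimately show ?thesis by (simp add: mult_nonpos_nonpos)
    qed
  qed
  then show "a * (a - m) \<le> y * (y - m)" using id by simp
  assume eq: "y * (y - m) = a * (a - m)"
  then have "(m * t) * (2 * a + m * (t - 1)) = 0" using id by simp
  then have "t = 0 \<or> 2 * a + m * (t - 1) = 0" using m by simp
  then show "y = a \<or> (a = 0 \<and> y = m) \<or> (a = m \<and> y = 0)"
  proof
    assume "t = 0" then show ?thesis using t by simp
  next
    assume h: "2 * a + m * (t - 1) = 0"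
    show ?thesis
    proof (cases "t \<ge> 1")
      case True
      then have mt: "m * (t - 1) \<ge> 0" using m by simp
      then have "a = 0" using h a by linarith
      then have "m * (t - 1) = 0" using h by simp
      then have "t = 1" using m by simp
      then show ?thesis using t \<open>a = 0\<close> by simp
    next
      case False
      then have "t \<le> 0" by simp
      show ?thesis
      proof (cases "t = 0")
        case True then show ?thesis using t by simp
      next
        case False
        then have tn: "t \<le> -1" using \<open>t \<le> 0\<close> by simp
        have "m * (t - 1) \<le> m * (-2)" using m tn by (intro mult_left_mono) auto
        then have "2 * a \<ge> 2 * m" using h by simp
        then have "a = m" using a by simp
        then have "m * (t + 1) = 0" using h by (simp add: algebra_simps)
        then have "t = -1" using m by simp
        then show ?thesis using t \<open>a = m\<close> by simp
      qed
    qed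
  qed
qed

lemma sum_lt_sep:
  fixes P N :: "nat set"
  assumes fin: "finite P" "finite N" and cd: "card P = card N" and ne: "P \<noteq> {}"
    and sep: "\<And>a b. a \<in> P \<Longrightarrow> b \<in> N \<Longrightarrow> a < b"
  shows "(\<Sum>a\<in>P. int a) < (\<Sum>b\<in>N. int b)"
proof -
  define M where "M = Max P"
  have MP: "M \<in> P" using fin ne M_def by simp
  have "(\<Sum>a\<in>P. int a) \<le> (\<Sum>a\<in>P. int M)" using fin M_def by (intro sum_mono) auto
  also have "\<dots> = int (card P) * int M" by simp
  also have "\<dots> < int (card N) * (int M + 1)"
  proof -
    have "card P > 0" using ne fin(1) card_gt_0_iff by blast
    then have "card N > 0" using cd by simp
    then show ?thesis using cd by simp
  qed
  also have "\<dots> = (\<Sum>b\<in>N. int M + 1)" by simp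
  also have "\<dots> \<le> (\<Sum>b\<in>N. int b)"
  proof (rule sum_mono)
    fix b assume "b \<in> N"
    then have "M < b" using sep[OF MP] by blast
    then show "int M + 1 \<le> int b" by simp
  qed
  finally show ?thesis .
qed

definition Qf :: "nat \<Rightarrow> (nat \<Rightarrow> int) \<Rightarrow> int" where "Qf n x = (\<Sum>l<n. (x l)^2)"
definition Lf :: "nat \<Rightarrow> (nat \<Rightarrow> int) \<Rightarrow> int" where "Lf n x = (\<Sum>l<n. int l * x l)"

lemma sum_restrict_I:
  fixes n :: nat
  assumes "I \<subseteq> {..<n}" "\<And>l. l < n \<Longrightarrow> l \<notin> I \<Longrightarrow> g l = (0::int)"
  shows "(\<Sum>l<n. g l) = (\<Sum>l\<in>I. g l)"
  using assms by (intro sum.mono_neutral_right finite_lessThan) auto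

lemma sum_if_sub:
  assumes "finite I" "P \<subseteq> I"
  shows "(\<Sum>l\<in>I. if l \<in> P then g l else 0) = (\<Sum>l\<in>P. g l)"
proof -
  have "(\<Sum>l\<in>I. if l \<in> P then g l else 0) = sum g (I \<inter> P)"
    by (rule sum.inter_restrict[OF assms(1), symmetric])
  also have "I \<inter> P = P" using assms(2) by blast
  finally show ?thesis .
qed

lemma core:
  fixes x lam :: "nat \<Rightarrow> int" and m c :: int
  assumes m: "m > 0" and I: "I \<subseteq> {..<n}"
    and out: "\<And>l. l \<notin> I \<Longrightarrow> x l = lam l"
    and sumI: "(\<Sum>l\<in>I. x l) = (\<Sum>l\<in>I. lam l)"
    and dv: "\<And>l. l \<in> I \<Longrightarrow> m dvd (x l - lam l)"
    and rng: "\<And>l. l \<in> I \<Longrightarrow> c \<le> lam l \<and> lam l \<le> c + m"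
    and ord: "\<And>l1 l2. l1 \<in> I \<Longrightarrow> l2 \<in> I \<Longrightarrow> lam l1 = c \<Longrightarrow> lam l2 = c + m \<Longrightarrow> l1 < l2"
  shows "Qf n lam \<le> Qf n x" and "Qf n x = Qf n lam \<Longrightarrow> x \<noteq> lam \<Longrightarrow> Lf n x < Lf n lam"
proof -
  have finI: "finite I" using I finite_subset by blast
  define D where "D l = (x l - c) * ((x l - c) - m) - (lam l - c) * ((lam l - c) - m)" for l
  have Dnn: "D l \<ge> 0" if l: "l \<in> I" for l
  proof -
    have "m dvd ((x l - c) - (lam l - c))" using dv[OF l] by simp
    then show ?thesis unfolding D_def using percoord(1)[OF m _ _, of "lam l - c" "x l - c"] rng[OF l] by simp
  qed
  have sq: "(x l)^2 - (lam l)^2 = D l + (m + 2 * c) * (x l - lam l)" for l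
    unfolding D_def power2_eq_square by algebra
  have "Qf n x - Qf n lam = (\<Sum>l<n. (x l)^2 - (lam l)^2)"
    unfolding Qf_def by (simp add: sum_subtractf)
  also have "\<dots> = (\<Sum>l\<in>I. (x l)^2 - (lam l)^2)"
    using I out by (intro sum_restrict_I) auto
  also have "\<dots> = (\<Sum>l\<in>I. D l) + (m + 2 * c) * (\<Sum>l\<in>I. x l - lam l)"
    unfolding sq by (simp add: sum.distrib sum_distrib_left)
  also have "(\<Sum>l\<in>I. x l - lam l) = 0" using sumI by (simp add: sum_subtractf)
  finally have QD: "Qf n x - Qf n lam = (\<Sum>l\<in>I. D l)" by simp
  have "(\<Sum>l\<in>I. D l) \<ge> 0" using Dnn by (intro sum_nonneg) auto
  then show "Qf n lam \<le> Qf n x" using QD by simp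
  assume Qeq: "Qf n x = Qf n lam" and ne: "x \<noteq> lam"
  then have "(\<Sum>l\<in>I. D l) = 0" using QD by simp
  then have D0: "\<forall>l\<in>I. D l = 0" using sum_nonneg_eq_0_iff[OF finI] Dnn by blast
  have cases: "x l = lam l \<or> (lam l = c \<and> x l = c + m) \<or> (lam l = c + m \<and> x l = c)" if l: "l \<in> I" for l
  proof -
    have "m dvd ((x l - c) - (lam l - c))" using dv[OF l] by simp
    moreover have "(x l - c) * ((x l - c) - m) = (lam l - c) * ((lam l - c) - m)"
      using D0 l unfolding D_def by simp
    ultimately show ?thesis using percoord(2)[OF m _ _, of "lam l - c" "x l - c"] rng[OF l] by auto
  qed
  define Pp where "Pp = {l\<in>I. x l \<noteq> lam l \<and> lam l = c}"
  define Nn where "Nn = {l\<in>I. x l \<noteq> lam l \<and> lam l \<noteq> c}"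
  have finP: "finite Pp" "finite Nn" using finI Pp_def Nn_def by auto
  have PI: "Pp \<subseteq> I" "Nn \<subseteq> I" using Pp_def Nn_def by auto
  have diff: "x l - lam l = (if l \<in> Pp then m else 0) - (if l \<in> Nn then m else 0)" if l: "l \<in> I" for l
    using cases[OF l] m unfolding Pp_def Nn_def using l by auto
  have "0 = (\<Sum>l\<in>I. x l - lam l)" using sumI by (simp add: sum_subtractf)
  also have "\<dots> = (\<Sum>l\<in>I. (if l \<in> Pp then m else 0)) - (\<Sum>l\<in>I. (if l \<in> Nn then m else 0))"
    using diff by (simp add: sum_subtractf[symmetric])
  also have "\<dots> = m * int (card Pp) - m * int (card Nn)"
    using finI PI by (simp add: sum_if_sub)
  finally have "card Pp = card Nn" using m by simp
  obtain l0 where l0: "x l0 \<noteq> lam l0" using ne by blast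
  then have "l0 \<in> I" using out by blast
  then have "l0 \<in> Pp \<or> l0 \<in> Nn" using l0 unfolding Pp_def Nn_def by auto
  then have Pne: "Pp \<noteq> {}" using \<open>card Pp = card Nn\<close> finP by auto
  have sep: "a < b" if "a \<in> Pp" "b \<in> Nn" for a b
  proof -
    have "lam b = c + m" using cases[of b] that(2) unfolding Nn_def by auto
    moreover have "lam a = c" using that(1) unfolding Pp_def by auto
    ultimately show ?thesis using ord that PI by blast
  qed
  have lt: "(\<Sum>a\<in>Pp. int a) < (\<Sum>b\<in>Nn. int b)"
    by (rule sum_lt_sep[OF finP \<open>card Pp = card Nn\<close> Pne sep])
  have "Lf n x - Lf n lam = (\<Sum>l<n. int l * (x l - lam l))"
    unfolding Lf_def by (simp add: sum_subtractf[symmetric] algebra_simps)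
  also have "\<dots> = (\<Sum>l\<in>I. int l * (x l - lam l))"
    using I out by (intro sum_restrict_I) auto
  also have "\<dots> = (\<Sum>l\<in>I. (if l \<in> Pp then m * int l else 0) - (if l \<in> Nn then m * int l else 0))"
  proof (rule sum.cong[OF refl])
    fix l assume l: "l \<in> I"
    show "int l * (x l - lam l) = (if l \<in> Pp then m * int l else 0) - (if l \<in> Nn then m * int l else 0)"
      unfolding diff[OF l] by (simp add: algebra_simps)
  qed
  also have "\<dots> = (\<Sum>l\<in>I. (if l \<in> Pp then m * int l else 0)) - (\<Sum>l\<in>I. (if l \<in> Nn then m * int l else 0))"
    by (simp add: sum_subtractf)
  also have "\<dots> = m * (\<Sum>a\<in>Pp. int a) - m * (\<Sum>b\<in>Nn. int b)"
    using finI PI by (simp add: sum_if_sub sum_distrib_left)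
  finally have "Lf n x - Lf n lam = m * ((\<Sum>a\<in>Pp. int a) - (\<Sum>b\<in>Nn. int b))"
    by (simp add: algebra_simps)
  moreover have "m * ((\<Sum>a\<in>Pp. int a) - (\<Sum>b\<in>Nn. int b)) < 0"
    using lt m by (simp add: mult_pos_neg)
  ultimately show "Lf n x < Lf n lam" by simp
qed




lemma window:
  fixes lam :: "nat \<Rightarrow> int"
  assumes nb: "nbhd n lam i j (int k + 1) (int r - 1)" and k: "k \<ge> 1" and r: "r \<ge> 2"
  defines "I \<equiv> {l. l < n \<and> (lam i > lam l \<or> (lam i = lam l \<and> i \<le> l)) \<and> (lam l > lam j \<or> (lam l = lam j \<and> l \<le> j))}"
  shows "I \<subseteq> {..<n}" "card I \<ge> k+1" "j \<in> I"
    "\<forall>l\<in>I. lam j \<le> lam l \<and> lam l \<le> lam j + int (r-1)"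
    "\<forall>l1\<in>I. \<forall>l2\<in>I. lam l1 = lam j \<longrightarrow> lam l2 = lam j + int (r-1) \<longrightarrow> l1 < l2"
proof -
  have ij: "i < n" "j < n" using nb unfolding nbhd_def by auto
  have rh: "rho n lam i - rho n lam j = of_int (int k)" using nb unfolding nbhd_def by simp
  have lamc: "lam i - lam j \<le> int r - 2 \<or> (lam i - lam j = int r - 1 \<and> j < i)"
    using nb unfolding nbhd_def by auto
  define Si where "Si = {l. l < n \<and> (lam l > lam i \<or> (lam l = lam i \<and> l < i))}"
  define Sj where "Sj = {l. l < n \<and> (lam l > lam j \<or> (lam l = lam j \<and> l < j))}"
  have rki: "rk n lam i = card Si" unfolding rk_def Si_def by simp
  have rkj: "rk n lam j = card Sj" unfolding rk_def Sj_def by simp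
  have "of_nat (rk n lam j) - of_nat (rk n lam i) = (of_int (int k) :: rat)"
    using rh unfolding rho_def by simp
  then have rkeq: "rk n lam j = rk n lam i + k" by linarith
  have finSi: "finite Si" unfolding Si_def by simp
  have finSj: "finite Sj" unfolding Sj_def by simp
  show II: "I \<subseteq> {..<n}" unfolding I_def by auto
  have finI: "finite I" using II finite_subset by blast
  have ipj: "lam i > lam j \<or> (lam i = lam j \<and> i \<le> j)"
  proof (rule ccontr)
    assume "\<not> ?thesis"
    then have h: "lam j > lam i \<or> (lam j = lam i \<and> j < i)" by auto
    have "Sj \<subseteq> Si" unfolding Sj_def Si_def using h by auto
    then have "card Sj \<le> card Si" using finSi by (rule card_mono[rotated])
    then show False using rkeq rki rkj k by simp
  qed
  show jI: "j \<in> I" unfolding I_def using ij ipj by auto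
  have "Sj \<subseteq> Si \<union> (I - {j})" unfolding Sj_def Si_def I_def by auto
  then have "card Sj \<le> card (Si \<union> (I - {j}))" using finSi finI by (intro card_mono) auto
  also have "\<dots> \<le> card Si + card (I - {j})" by (rule card_Un_le)
  also have "card (I - {j}) = card I - 1" using jI finI by simp
  finally have c1: "card Sj \<le> card Si + (card I - 1)" .
  have "card I > 0" using jI finI card_gt_0_iff by blast
  then show "card I \<ge> k + 1" using c1 rkeq rki rkj by linarith
  have lie: "lam i \<le> lam j + int (r-1)" using lamc r by auto
  show "\<forall>l\<in>I. lam j \<le> lam l \<and> lam l \<le> lam j + int (r-1)"
  proof
    fix l assume "l \<in> I"
    then have "lam j \<le> lam l" "lam l \<le> lam i" unfolding I_def by auto
    then show "lam j \<le> lam l \<and> lam l \<le> lam j + int (r-1)" using lie by simp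
  qed
  show "\<forall>l1\<in>I. \<forall>l2\<in>I. lam l1 = lam j \<longrightarrow> lam l2 = lam j + int (r-1) \<longrightarrow> l1 < l2"
  proof (intro ballI impI)
    fix l1 l2 assume l1: "l1 \<in> I" and l2: "l2 \<in> I" and e1: "lam l1 = lam j" and e2: "lam l2 = lam j + int (r-1)"
    have "lam i \<ge> lam l2" using l2 unfolding I_def by auto
    then have "lam i - lam j \<ge> int r - 1" using e2 r by simp
    then have h: "lam i - lam j = int r - 1" "j < i" using lamc by auto
    then have "lam i = lam l2" using e2 r by simp
    then have "i \<le> l2" using l2 unfolding I_def by auto
    moreover have "l1 \<le> j" using l1 e1 unfolding I_def by auto
    ultimately show "l1 < l2" using h by simp
  qed
qed


lemma inj_C:
  fixes f :: "(nat \<Rightarrow> int) \<Rightarrow> complex"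
  assumes r: "r \<ge> 2" and k: "k \<ge> 1" and f: "f \<in> Iprime n k r"
    and nb: "\<And>x. f x \<noteq> 0 \<Longrightarrow> x \<notin> Bkr n k r"
  shows "f = (\<lambda>x. 0)"
proof (rule ccontr)
  assume fne: "f \<noteq> (\<lambda>x. 0)"
  define A where "A = {x. f x \<noteq> 0}"
  have finA: "finite A" and APn: "A \<subseteq> Pn n" using f unfolding A_def Iprime_def LV_def by auto
  have Ane: "A \<noteq> {}" using fne unfolding A_def by auto
  define Qm where "Qm = Max (Qf n ` A)"
  define A' where "A' = {x\<in>A. Qf n x = Qm}"
  have finA': "finite A'" using finA A'_def by simp
  have "Qm \<in> Qf n ` A" unfolding Qm_def using finA Ane by simp
  then have A'ne: "A' \<noteq> {}" unfolding A'_def by auto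
  define Lm where "Lm = Min (Lf n ` A')"
  have "Lm \<in> Lf n ` A'" unfolding Lm_def using finA' A'ne by simp
  then obtain lam where lamA': "lam \<in> A'" and lamL: "Lf n lam = Lm" by auto
  have lamA: "lam \<in> A" and lamQ: "Qf n lam = Qm" using lamA' A'_def by auto
  have lamPn: "lam \<in> Pn n" using lamA APn by auto
  have "lam \<notin> Bkr n k r" using nb lamA A_def by auto
  then obtain i j where nbh: "nbhd n lam i j (int k + 1) (int r - 1)"
    using lamPn unfolding Bkr_def by auto
  define I where "I = {l. l < n \<and> (lam i > lam l \<or> (lam i = lam l \<and> i \<le> l)) \<and> (lam l > lam j \<or> (lam l = lam j \<and> l \<le> j))}"
  have W: "I \<subseteq> {..<n}" "card I \<ge> k+1" "j \<in> I"
    "\<forall>l\<in>I. lam j \<le> lam l \<and> lam l \<le> lam j + int (r-1)"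
    "\<forall>l1\<in>I. \<forall>l2\<in>I. lam l1 = lam j \<longrightarrow> lam l2 = lam j + int (r-1) \<longrightarrow> l1 < l2"
    using window[OF nbh k r, folded I_def] by blast+
  have jn: "j < n" using W(1) W(3) by auto
  define T where "T = {x. f x \<noteq> 0 \<and> (\<forall>l\<in>I. int (r-1) dvd (x l - lam l)) \<and> (\<forall>l<n. phiI I j x l = phiI I j lam l)}"
  have sT: "(\<Sum>x\<in>T. f x) = 0" unfolding T_def by (rule iprime_eq[OF r f W(1) W(2) W(3)])
  have Tl: "T = {lam}"
  proof
    show "{lam} \<subseteq> T" using lamA unfolding T_def A_def by auto
    show "T \<subseteq> {lam}"
    proof
      fix x assume xT: "x \<in> T"
      have xA: "x \<in> A" using xT unfolding T_def A_def by auto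
      have xPn: "x \<in> Pn n" using xA APn by auto
      have fib: "\<forall>l<n. phiI I j x l = phiI I j lam l" using xT unfolding T_def by auto
      have out: "x l = lam l" if l: "l \<notin> I" for l
      proof (cases "l < n")
        case True
        then have "phiI I j x l = phiI I j lam l" using fib by blast
        then show ?thesis using l by (simp add: phiI_def)
      next
        case False
        then show ?thesis using xPn lamPn unfolding Pn_def by auto
      qed
      have "phiI I j x j = phiI I j lam j" using fib jn by blast
      then have sumI: "(\<Sum>l\<in>I. x l) = (\<Sum>l\<in>I. lam l)"
        using W(3) by (simp add: phiI_def)
      have m0: "int (r-1) > 0" using r by simp
      have dv: "\<And>l. l \<in> I \<Longrightarrow> int (r-1) dvd (x l - lam l)" using xT unfolding T_def by blast
      have rng: "\<And>l. l \<in> I \<Longrightarrow> lam j \<le> lam l \<and> lam l \<le> lam j + int (r-1)" using W(4) by blast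
      have ord: "\<And>l1 l2. l1 \<in> I \<Longrightarrow> l2 \<in> I \<Longrightarrow> lam l1 = lam j \<Longrightarrow> lam l2 = lam j + int (r-1) \<Longrightarrow> l1 < l2"
        using W(5) by blast
      have C1: "Qf n lam \<le> Qf n x"
        using core(1)[where m = "int (r-1)" and c = "lam j" and x = x and lam = lam and I = I and n = n]
          m0 W(1) out sumI dv rng ord by blast
      have C2: "Qf n x = Qf n lam \<Longrightarrow> x \<noteq> lam \<Longrightarrow> Lf n x < Lf n lam"
        using core(2)[where m = "int (r-1)" and c = "lam j" and x = x and lam = lam and I = I and n = n]
          m0 W(1) out sumI dv rng ord by blast
      have "Qf n x \<le> Qm" unfolding Qm_def by (rule Max_ge[OF finite_imageI[OF finA] imageI[OF xA]])
      then have Qeq: "Qf n x = Qf n lam" using C1 lamQ by linarith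
      then have xA': "x \<in> A'" unfolding A'_def using xA lamQ by simp
      have "Lm \<le> Lf n x" unfolding Lm_def by (rule Min_le[OF finite_imageI[OF finA'] imageI[OF xA']])
      then have "x = lam" using C2[OF Qeq] lamL by (meson not_le)
      then show "x \<in> {lam}" by simp
    qed
  qed
  then have "f lam = 0" using sT by simp
  then show False using lamA A_def by simp
qed





definition specK :: "K \<Rightarrow> complex \<Rightarrow> bool" where
  "specK X c \<longleftrightarrow> (\<exists>A e. X = Fract A (monom 1 e) \<and> poly A 1 = c)"

definition monoK :: "K \<Rightarrow> complex \<Rightarrow> bool" where
  "monoK X c \<longleftrightarrow> c \<noteq> 0 \<and> (\<exists>e1 e2. X = Fract (monom c e1) (monom 1 e2))"

lemma monom10: "monom (1::complex) 0 = 1" by (simp add: monom_0 one_pCons)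

lemma monom1_nz: "monom (1::complex) e \<noteq> 0" by simp

lemma specK_add: "specK X a \<Longrightarrow> specK Y b \<Longrightarrow> specK (X + Y) (a + b)"
proof -
  assume "specK X a" "specK Y b"
  then obtain A e B e' where X: "X = Fract A (monom 1 e)" "poly A 1 = a"
    and Y: "Y = Fract B (monom 1 e')" "poly B 1 = b" unfolding specK_def by blast
  have "X + Y = Fract (A * monom 1 e' + B * monom 1 e) (monom 1 (e + e'))"
    using X Y by (simp add: mult_monom)
  moreover have "poly (A * monom 1 e' + B * monom 1 e) 1 = a + b"
    using X Y by (simp add: poly_monom)
  ultimately show ?thesis unfolding specK_def by blast
qed

lemma specK_mult: "specK X a \<Longrightarrow> specK Y b \<Longrightarrow> specK (X * Y) (a * b)"
proof -
  assume "specK X a" "specK Y b"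
  then obtain A e B e' where X: "X = Fract A (monom 1 e)" "poly A 1 = a"
    and Y: "Y = Fract B (monom 1 e')" "poly B 1 = b" unfolding specK_def by blast
  have "X * Y = Fract (A * B) (monom 1 (e + e'))"
    using X Y by (simp add: mult_monom)
  moreover have "poly (A * B) 1 = a * b" using X Y by simp
  ultimately show ?thesis unfolding specK_def by blast
qed

lemma specK_zero: "specK 0 0"
  unfolding specK_def by (rule exI[of _ 0], rule exI[of _ 0]) (simp add: fract_collapse)

lemma specK_sum: "finite S \<Longrightarrow> (\<And>x. x \<in> S \<Longrightarrow> specK (F x) (G x)) \<Longrightarrow> specK (\<Sum>x\<in>S. F x) (\<Sum>x\<in>S. G x)"
  by (induction S rule: finite_induct) (auto intro: specK_add specK_zero)

lemma specK_eq0: "specK 0 c \<Longrightarrow> c = 0"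
proof -
  assume "specK 0 c"
  then obtain A e where h: "0 = Fract A (monom 1 e)" "poly A 1 = c" unfolding specK_def by blast
  have "Fract A (monom 1 e) = Fract 0 1" using h(1) by (simp add: fract_collapse)
  then have "A * 1 = 0 * monom 1 e" using eq_fract(1)[of "monom 1 e" 1 A 0] by simp
  then show ?thesis using h(2) by simp
qed

lemma specK_const: "specK (Fract R 1) (poly R 1)"
  unfolding specK_def by (rule exI[of _ R], rule exI[of _ 0]) (simp add: monom10)

lemma monoK_spec: "monoK X c \<Longrightarrow> specK X c"
  unfolding monoK_def specK_def by (auto simp: poly_monom)

lemma monoK_nz: "monoK X c \<Longrightarrow> X \<noteq> 0"
proof
  assume "monoK X c" "X = 0"
  then have "specK 0 c" "c \<noteq> 0" using monoK_spec monoK_def by auto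
  then show False using specK_eq0 by blast
qed

lemma monoK_one: "monoK 1 1"
proof -
  have "(1::K) = Fract (monom 1 0) (monom 1 0)" by (simp add: monom10 fract_collapse)
  then show ?thesis unfolding monoK_def by (intro conjI exI, simp, assumption)
qed

lemma monoK_mult: "monoK X a \<Longrightarrow> monoK Y b \<Longrightarrow> monoK (X * Y) (a * b)"
proof -
  assume "monoK X a" "monoK Y b"
  then obtain e1 e2 f1 f2 where a: "a \<noteq> 0" "X = Fract (monom a e1) (monom 1 e2)"
    and b: "b \<noteq> 0" "Y = Fract (monom b f1) (monom 1 f2)" unfolding monoK_def by blast
  have eq: "X * Y = Fract (monom (a * b) (e1 + f1)) (monom 1 (e2 + f2))" using a b by (simp add: mult_monom)
  show ?thesis unfolding monoK_def
    apply (rule conjI)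
    using a b apply simp
    apply (rule exI[of _ "e1+f1"], rule exI[of _ "e2+f2"])
    by (rule eq)
qed

lemma monoK_inverse: "monoK X a \<Longrightarrow> monoK (inverse X) (inverse a)"
proof -
  assume "monoK X a"
  then obtain e1 e2 where a: "a \<noteq> 0" and X: "X = Fract (monom a e1) (monom 1 e2)" unfolding monoK_def by blast
  have "inverse X = Fract (monom 1 e2) (monom a e1)" using X by simp
  also have "\<dots> = Fract (monom (inverse a) e2) (monom 1 e1)"
    using a by (simp add: eq_fract mult_monom add.commute)
  finally show ?thesis using a unfolding monoK_def by auto
qed

lemma monoK_pow: "monoK X a \<Longrightarrow> monoK (X ^ d) (a ^ d)"
  by (induction d) (auto intro: monoK_mult monoK_one)

lemma monoK_powi: "monoK X a \<Longrightarrow> monoK (X powi d) (a powi d)"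
  unfolding power_int_def by (auto intro: monoK_pow monoK_inverse)

lemma monoK_prod: "finite S \<Longrightarrow> (\<And>x. x \<in> S \<Longrightarrow> monoK (F x) (G x)) \<Longrightarrow> monoK (\<Prod>x\<in>S. F x) (\<Prod>x\<in>S. G x)"
  by (induction S rule: finite_induct) (auto intro: monoK_mult monoK_one)

lemma monoK_const: "c \<noteq> 0 \<Longrightarrow> monoK (Fract [:c:] 1) c"
proof -
  assume c: "c \<noteq> 0"
  have eq: "Fract [:c:] 1 = Fract (monom c 0) (monom 1 0)" by (simp add: monom10 monom_0 one_pCons)
  show ?thesis unfolding monoK_def
    apply (rule conjI)
    using c apply simp
    apply (rule exI[of _ 0], rule exI[of _ 0])
    by (rule eq)
qed

lemma monoK_uK: "monoK (uK N) 1"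
proof -
  have "uK N = Fract (monom 1 N) (monom 1 0)" unfolding uK_def by (simp add: monom10)
  then show ?thesis unfolding monoK_def by (intro conjI exI, simp, assumption)
qed

lemma monoK_tK: "monoK (tK N k r) 1"
  unfolding tK_def using monoK_pow[OF monoK_uK] by simp

lemma monoK_qK: "monoK (qK N k r) (tau r)"
proof -
  have "monoK (Fract [:tau r:] 1 * inverse (uK N ^ ((k + 1) div gcd (k + 1) (r - 1)))) (tau r * inverse (1 ^ ((k + 1) div gcd (k + 1) (r - 1))))"
    by (intro monoK_mult monoK_const monoK_inverse monoK_pow monoK_uK) (simp add: tau_def)
  then show ?thesis unfolding qK_def by simp
qed



lemma pos_card:
  fixes xs :: "nat list"
  assumes s: "sorted_wrt (<) xs" and a: "a < length xs"
  shows "card {y \<in> set xs. y < xs!a} = a"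
proof -
  have d: "distinct xs" using s strict_sorted_iff by blast
  have "{y \<in> set xs. y < xs!a} = set (take a xs)"
  proof
    show "{y \<in> set xs. y < xs!a} \<subseteq> set (take a xs)"
    proof
      fix y assume "y \<in> {y \<in> set xs. y < xs!a}"
      then obtain b where b: "b < length xs" "y = xs!b" "xs!b < xs!a" by (auto simp: in_set_conv_nth)
      have "b < a"
      proof (rule ccontr)
        assume "\<not> b < a"
        then have "a = b \<or> a < b" by auto
        then show False
          using b sorted_wrt_nth_less[OF s, of a b] by auto
      qed
      then show "y \<in> set (take a xs)" using b a by (auto simp: in_set_conv_nth intro!: exI[of _ b])
    qed
    show "set (take a xs) \<subseteq> {y \<in> set xs. y < xs!a}"
    proof
      fix y assume "y \<in> set (take a xs)"
      then obtain b where b: "b < a" "y = xs!b" using a by (auto simp: in_set_conv_nth)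
      then show "y \<in> {y \<in> set xs. y < xs!a}"
        using sorted_wrt_nth_less[OF s b(1) a] a by auto
    qed
  qed
  moreover have "card (set (take a xs)) = a" using d a by (simp add: distinct_card)
  ultimately show ?thesis by simp
qed

lemma telescope_nat:
  fixes h :: "nat \<Rightarrow> nat"
  assumes "\<forall>a<k. h a \<le> h (Suc a)"
  shows "(\<Sum>a<k. h (Suc a) - h a) = h k - h 0 \<and> h 0 \<le> h k"
  using assms by (induction k) auto


lemma lift:
  fixes zb :: "nat \<Rightarrow> complex"
  assumes r: "r \<ge> 2" and zb: "zb \<in> Zprime n k r"
  shows "\<exists>z. z \<in> Zkr n k r (tK N k r) (qK N k r) \<and> (\<forall>l<n. monoK (z l) (zb l))"
proof -
  obtain js w p where zbnz: "\<forall>i<n. zb i \<noteq> 0" and ljs: "length js = k + 1" and sjs: "sorted_wrt (<) js"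
    and setjs: "set js \<subseteq> {..<n}" and lp: "length p = k + 1"
    and pa: "\<forall>a<k + 1. p ! a \<le> r - 2 \<and> zb (js ! a) = tau r ^ (p ! a) * w"
    using zb unfolding Zprime_def by blast
  define J where "J = set js"
  have cardJ: "card J = k + 1" unfolding J_def using sjs ljs strict_sorted_iff distinct_card by metis
  have finJ: "finite J" unfolding J_def by simp
  have Jn: "J \<subseteq> {..<n}" using setjs J_def by simp
  have jrep: "\<exists>q. q \<le> r - 2 \<and> zb l = tau r ^ q * w" if lJ: "l \<in> J" for l
  proof -
    obtain a where "a < length js" "l = js ! a" using lJ J_def by (auto simp: in_set_conv_nth)
    then show ?thesis using pa ljs by auto
  qed
  define pf where "pf l = (SOME q. q \<le> r - 2 \<and> zb l = tau r ^ q * w)" for l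
  have pfP: "pf l \<le> r - 2 \<and> zb l = tau r ^ pf l * w" if "l \<in> J" for l
    unfolding pf_def using someI_ex[OF jrep[OF that]] .
  have "js ! 0 \<in> J" using ljs J_def by simp
  then have wnz: "w \<noteq> 0" using pfP zbnz Jn by fastforce
  define key where "key l = pf l * n + l" for l
  have keymod: "key l mod n = l" "key l div n = pf l" if "l \<in> J" for l
    using that Jn unfolding key_def by auto
  have injk: "inj_on key J" by (rule inj_onI) (metis keymod(1))
  define KS where "KS = key ` J"
  have finKS: "finite KS" using finJ KS_def by simp
  have cardKS: "card KS = k + 1" using card_image[OF injk] cardJ KS_def by simp
  define ks where "ks = sorted_list_of_set KS"
  have lks: "length ks = k + 1" using cardKS ks_def finKS by simp
  have sks: "sorted_wrt (<) ks" unfolding ks_def by (rule strict_sorted_list_of_set)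
  have setks: "set ks = KS" unfolding ks_def using finKS by simp
  have dks: "distinct ks" using sks strict_sorted_iff by blast
  define ch where "ch = map (\<lambda>\<kappa>. \<kappa> mod n) ks"
  have lis: "length ch = k + 1" using lks ch_def by simp
  have isk: "ch ! a \<in> J \<and> key (ch ! a) = ks ! a" if a: "a < k + 1" for a
  proof -
    have "ks ! a \<in> KS" using a lks setks nth_mem by metis
    then obtain l where l: "l \<in> J" "ks ! a = key l" using KS_def by auto
    have "ch ! a = l" using a lks l keymod(1) unfolding ch_def by simp
    then show ?thesis using l by simp
  qed
  define pos where "pos l = card {\<kappa>\<in>KS. \<kappa> < key l}" for l
  have posa: "pos (ch ! a) = a" if a: "a < k + 1" for a
  proof -
    have "pos (ch ! a) = card {y \<in> set ks. y < ks ! a}" unfolding pos_def using isk[OF a] setks by simp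
    also have "\<dots> = a" using pos_card[OF sks] a lks by simp
    finally show ?thesis .
  qed
  define h where "h a = pf (ch ! a)" for a
  have hdiv: "h a = ks ! a div n" if "a < k + 1" for a
    unfolding h_def using isk[OF that] keymod(2) by metis
  have hmono: "h a \<le> h (Suc a)" if a: "a < k" for a
  proof -
    have "ks ! a < ks ! Suc a" using sorted_wrt_nth_less[OF sks, of a "Suc a"] a lks by simp
    then show ?thesis using hdiv a by (simp add: div_le_mono)
  qed
  define P0 where "P0 = Min (pf ` J)"
  have P0le: "P0 \<le> pf l" if "l \<in> J" for l unfolding P0_def using finJ that by simp
  define t where "t = tK N k r"
  define q where "q = qK N k r"
  define W :: K where "W = Fract [: tau r ^ P0 * w :] 1"
  have monoW: "monoK W (tau r ^ P0 * w)" unfolding W_def using wnz tau_nz by (intro monoK_const) simp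
  define z where "z l = (if l \<in> J then W * t ^ pos l * q ^ (pf l - P0) else Fract [: zb l :] 1)" for l
  have monoz: "monoK (z l) (zb l)" if l: "l < n" for l
  proof (cases "l \<in> J")
    case True
    have "monoK (W * t ^ pos l * q ^ (pf l - P0)) (tau r ^ P0 * w * 1 ^ pos l * tau r ^ (pf l - P0))"
      unfolding t_def q_def by (intro monoK_mult monoK_pow monoW monoK_tK monoK_qK)
    moreover have "tau r ^ P0 * w * 1 ^ pos l * tau r ^ (pf l - P0) = zb l"
    proof -
      have "tau r ^ P0 * tau r ^ (pf l - P0) = tau r ^ pf l"
        using P0le[OF True] by (simp add: power_add[symmetric])
      then show ?thesis using pfP[OF True] by (simp add: algebra_simps)
    qed
    ultimately show ?thesis using True z_def by simp
  next
    case False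
    then show ?thesis using monoK_const zbnz l z_def by simp
  qed
  define s where "s = map (\<lambda>a. h (Suc a) - h a) [0..<k]"
  have tel: "(\<Sum>a<k. h (Suc a) - h a) = h k - h 0 \<and> h 0 \<le> h k"
    by (rule telescope_nat) (use hmono in auto)
  have sums: "sum_list s \<le> r - 2"
  proof -
    have "sum_list s = (\<Sum>a<k. h (Suc a) - h a)"
      unfolding s_def by (simp add: interv_sum_list_conv_sum_set_nat atLeast0LessThan)
    also have "\<dots> = h k - h 0" using tel by simp
    also have "\<dots> \<le> h k" by simp
    also have "h k \<le> r - 2" unfolding h_def using pfP isk[of k] by simp
    finally show ?thesis .
  qed
  have dis: "distinct ch"
    unfolding distinct_conv_nth
  proof (intro allI impI)
    fix a b assume a: "a < length ch" and b: "b < length ch" and ne: "a \<noteq> b"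
    show "ch ! a \<noteq> ch ! b"
    proof
      assume "ch ! a = ch ! b"
      then have "ks ! a = ks ! b" using isk a b lis by metis
      then show False using dks a b ne lis lks nth_eq_iff_index_eq by metis
    qed
  qed
  have setis: "set ch \<subseteq> {..<n}"
  proof
    fix l assume "l \<in> set ch"
    then obtain a where "a < length ch" "l = ch ! a" by (auto simp: in_set_conv_nth)
    then show "l \<in> {..<n}" using isk lis Jn by auto
  qed
  have chain: "z (ch ! (a + 1)) = z (ch ! a) * t * q ^ (s ! a) \<and> (s ! a = 0 \<longrightarrow> ch ! a < ch ! (a + 1))"
    if a: "a < k" for a
  proof
    have a1: "a < k + 1" "Suc a < k + 1" using a by auto
    have J1: "ch ! a \<in> J" "ch ! Suc a \<in> J" using isk a1 by auto
    have sa: "s ! a = h (Suc a) - h a" unfolding s_def using a by simp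
    have hm: "P0 \<le> h a" "h a \<le> h (Suc a)" using P0le J1 hmono a unfolding h_def by auto
    have "z (ch ! (a + 1)) = W * t ^ (Suc a) * q ^ (h (Suc a) - P0)"
      unfolding z_def using J1 posa[OF a1(2)] h_def by simp
    also have "\<dots> = W * t ^ a * q ^ (h a - P0) * t * q ^ (h (Suc a) - h a)"
    proof -
      have "h (Suc a) - P0 = (h a - P0) + (h (Suc a) - h a)" using hm by simp
      then show ?thesis by (simp add: power_add algebra_simps)
    qed
    also have "\<dots> = z (ch ! a) * t * q ^ (s ! a)"
      unfolding z_def using J1 posa[OF a1(1)] h_def sa by simp
    finally show "z (ch ! (a + 1)) = z (ch ! a) * t * q ^ (s ! a)" .
    show "s ! a = 0 \<longrightarrow> ch ! a < ch ! (a + 1)"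
    proof
      assume "s ! a = 0"
      then have heq: "pf (ch ! a) = pf (ch ! Suc a)" using sa hm unfolding h_def by simp
      have "ks ! a < ks ! Suc a" using sorted_wrt_nth_less[OF sks, of a "Suc a"] a lks by simp
      then have "key (ch ! a) < key (ch ! Suc a)" using isk a1 by simp
      then show "ch ! a < ch ! (a + 1)" using heq unfolding key_def by simp
    qed
  qed
  have zK: "z \<in> Zkr n k r t q"
    unfolding Zkr_def mem_Collect_eq
    apply (rule conjI)
    using monoz monoK_nz apply blast
    apply (rule exI[of _ "ch"], rule exI[of _ s])
    using lis dis setis sums chain s_def by simp
  then show ?thesis using monoz unfolding t_def q_def by blast
qed





lemma LV_supp: "f \<in> LV n \<Longrightarrow> finite {x. f x \<noteq> 0}" unfolding LV_def by auto

lemma lpeval_add: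
  fixes f g :: "(nat \<Rightarrow> int) \<Rightarrow> 'a::field"
  assumes "f \<in> LV n" "g \<in> LV n"
  shows "lpeval n (\<lambda>x. f x + g x) z = lpeval n f z + lpeval n g z"
proof -
  define A where "A = {x. f x \<noteq> 0} \<union> {x. g x \<noteq> 0}"
  have finA: "finite A" using assms LV_supp A_def by auto
  have "lpeval n (\<lambda>x. f x + g x) z = (\<Sum>x\<in>A. (f x + g x) * (\<Prod>i<n. z i powi x i))"
    by (rule lpeval_superset[OF finA]) (auto simp: A_def)
  also have "\<dots> = (\<Sum>x\<in>A. f x * (\<Prod>i<n. z i powi x i)) + (\<Sum>x\<in>A. g x * (\<Prod>i<n. z i powi x i))"
    by (simp add: sum.distrib algebra_simps)
  also have "\<dots> = lpeval n f z + lpeval n g z"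
    using lpeval_superset[OF finA, of f n z] lpeval_superset[OF finA, of g n z] A_def by auto
  finally show ?thesis .
qed

lemma lpeval_scale:
  fixes f :: "(nat \<Rightarrow> int) \<Rightarrow> 'a::field"
  assumes "f \<in> LV n"
  shows "lpeval n (\<lambda>x. c * f x) z = c * lpeval n f z"
proof -
  define A where "A = {x. f x \<noteq> 0}"
  have finA: "finite A" using assms LV_supp A_def by auto
  have "lpeval n (\<lambda>x. c * f x) z = (\<Sum>x\<in>A. (c * f x) * (\<Prod>i<n. z i powi x i))"
    by (rule lpeval_superset[OF finA]) (auto simp: A_def)
  also have "\<dots> = c * (\<Sum>x\<in>A. f x * (\<Prod>i<n. z i powi x i))"
    by (simp add: sum_distrib_left algebra_simps)
  also have "\<dots> = c * lpeval n f z"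
    using lpeval_superset[OF finA, of f n z] A_def by auto
  finally show ?thesis .
qed

lemma van_closed:
  fixes Z :: "(nat \<Rightarrow> 'a::field) set" and n M :: nat
  defines "S \<equiv> {f \<in> LV n. \<forall>z\<in>Z. lpeval n f z = 0} \<inter> VM n M"
  shows "\<And>f g. f \<in> S \<Longrightarrow> g \<in> S \<Longrightarrow> (\<lambda>x. f x + g x) \<in> S"
    and "\<And>c f. f \<in> S \<Longrightarrow> (\<lambda>x. c * f x) \<in> S"
    and "(\<lambda>x. 0) \<in> S"
proof -
  fix f g assume f: "f \<in> S" and g: "g \<in> S"
  have fL: "f \<in> LV n" and gL: "g \<in> LV n" using f g S_def by auto
  have "{x. f x + g x \<noteq> 0} \<subseteq> {x. f x \<noteq> 0} \<union> {x. g x \<noteq> 0}" by auto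
  then have fin: "finite {x. f x + g x \<noteq> 0}" using LV_supp[OF fL] LV_supp[OF gL] finite_subset by blast
  have L: "(\<lambda>x. f x + g x) \<in> LV n" using fin fL gL unfolding LV_def
    by (auto, metis add.right_neutral)
  have V: "(\<lambda>x. f x + g x) \<in> VM n M" using L f g unfolding S_def VM_def
    by (auto, metis add.right_neutral)
  show "(\<lambda>x. f x + g x) \<in> S" using L V f g lpeval_add[OF fL gL] unfolding S_def by auto
next
  fix c f assume f: "f \<in> S"
  have fL: "f \<in> LV n" using f S_def by auto
  have fin: "finite {x. c * f x \<noteq> 0}" using LV_supp[OF fL] by (rule finite_subset[rotated]) auto
  have L: "(\<lambda>x. c * f x) \<in> LV n" using fin fL unfolding LV_def by auto
  have V: "(\<lambda>x. c * f x) \<in> VM n M" using L f unfolding S_def VM_def by auto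
  show "(\<lambda>x. c * f x) \<in> S" using L V f lpeval_scale[OF fL] unfolding S_def by auto
next
  show "(\<lambda>x. 0) \<in> S" unfolding S_def LV_def VM_def lpeval_def by auto
qed

lemma finite_PM: "finite (PM n M)"
proof -
  define Ls where "Ls = {xs. set xs \<subseteq> {- int M..int M} \<and> length xs = n}"
  have "finite Ls" unfolding Ls_def by (rule finite_lists_length_eq) simp
  moreover have "PM n M \<subseteq> (\<lambda>xs i. if i < n then xs ! i else 0) ` Ls"
  proof
    fix lam assume lam: "lam \<in> PM n M"
    have "lam = (\<lambda>i. if i < n then map lam [0..<n] ! i else 0)"
      using lam unfolding PM_def Pn_def by (auto simp: fun_eq_iff)
    moreover have "map lam [0..<n] \<in> Ls" using lam unfolding PM_def Ls_def by auto
    ultimately show "lam \<in> (\<lambda>xs i. if i < n then xs ! i else 0) ` Ls" by blast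
  qed
  ultimately show ?thesis using finite_subset by blast
qed


lemma inj_K:
  fixes f :: "(nat \<Rightarrow> int) \<Rightarrow> K"
  assumes r: "r \<ge> 2" and k: "k \<ge> 1" and f: "f \<in> Ikr N n k r"
    and nb: "\<And>x. f x \<noteq> 0 \<Longrightarrow> x \<notin> Bkr n k r"
  shows "f = (\<lambda>x. 0)"
proof (rule ccontr)
  assume fne: "f \<noteq> (\<lambda>x. 0)"
  define A where "A = {x. f x \<noteq> 0}"
  have finA: "finite A" and APn: "A \<subseteq> Pn n" using f unfolding A_def Ikr_def LV_def by auto
  have fLV: "f \<in> LV n" using f unfolding Ikr_def by auto
  have Ane: "A \<noteq> {}" using fne unfolding A_def by auto
  have "\<forall>x. \<exists>ab. f x = Fract (fst ab) (snd ab) \<and> snd ab \<noteq> 0"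
  proof
    fix x
    obtain a b where "f x = Fract a b" "b \<noteq> 0" by (cases "f x") auto
    then show "\<exists>ab. f x = Fract (fst ab) (snd ab) \<and> snd ab \<noteq> 0" by (intro exI[of _ "(a, b)"]) simp
  qed
  then obtain F where F: "\<And>x. f x = Fract (fst (F x)) (snd (F x)) \<and> snd (F x) \<noteq> 0" by metis
  define num where "num x = fst (F x)" for x
  define den where "den x = snd (F x)" for x
  have fx: "f x = Fract (num x) (den x)" and denz: "den x \<noteq> 0" for x using F num_def den_def by auto
  have numz: "num x \<noteq> 0" if "x \<in> A" for x
    using that fx[of x] unfolding A_def by (auto simp: fract_collapse)
  define D where "D = (\<Prod>y\<in>A. den y)"
  have Dz: "D \<noteq> 0" unfolding D_def using denz finA by simp
  define Pp where "Pp x = num x * (\<Prod>y\<in>A-{x}. den y)" for x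
  have Ppz: "Pp x \<noteq> 0" if "x \<in> A" for x unfolding Pp_def using numz[OF that] denz finA by simp
  have fD: "f x * Fract D 1 = Fract (Pp x) 1" if xA: "x \<in> A" for x
  proof -
    have Dx: "D = den x * (\<Prod>y\<in>A-{x}. den y)" unfolding D_def using prod.remove[OF finA xA] by simp
    have "f x * Fract D 1 = Fract (num x * D) (den x * 1)" using fx by simp
    also have "\<dots> = Fract (Pp x) 1"
      using denz by (simp add: eq_fract Dx Pp_def algebra_simps)
    finally show ?thesis .
  qed
  define ord where "ord x = order 1 (Pp x)" for x
  define j0 where "j0 = Min (ord ` A)"
  have "j0 \<in> ord ` A" unfolding j0_def using finA Ane by simp
  then obtain x0 where x0A: "x0 \<in> A" and ox0: "ord x0 = j0" by auto
  have j0le: "j0 \<le> ord x" if "x \<in> A" for x unfolding j0_def using finA that by simp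
  define E :: "complex poly" where "E = [:-1, 1:] ^ j0"
  have Ez: "E \<noteq> 0" unfolding E_def by simp
  have Edvd: "E dvd Pp x" if "x \<in> A" for x
    unfolding E_def using order_divides j0le[OF that] ord_def by metis
  define R where "R x = Pp x div E" for x
  have PR: "Pp x = E * R x" if "x \<in> A" for x unfolding R_def using Edvd[OF that] by simp
  have Rx0: "poly (R x0) 1 \<noteq> 0"
  proof
    assume "poly (R x0) 1 = 0"
    then have "[:-1, 1:] dvd R x0" by (simp add: poly_eq_0_iff_dvd)
    then have "E * [:-1, 1:] dvd E * R x0" by (rule mult_dvd_mono[OF dvd_refl])
    then have "E * [:-1, 1:] dvd Pp x0" using PR[OF x0A] by simp
    then have "[:-1, 1:] ^ Suc j0 dvd Pp x0" unfolding E_def by (simp add: mult.commute)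
    then have "Suc j0 \<le> order 1 (Pp x0)" using order_divides Ppz[OF x0A] by metis
    then show False using ox0 ord_def by simp
  qed
  define c :: K where "c = Fract D 1 * Fract 1 E"
  have cf: "c * f x = Fract (R x) 1" if xA: "x \<in> A" for x
  proof -
    have "c * f x = (f x * Fract D 1) * Fract 1 E" unfolding c_def by (simp add: algebra_simps)
    also have "\<dots> = Fract (Pp x) E" using fD[OF xA] by simp
    also have "\<dots> = Fract (E * R x) (E * 1)" using PR[OF xA] by simp
    also have "\<dots> = Fract (R x) 1" using Ez by (rule mult_fract_cancel)
    finally show ?thesis .
  qed
  define fb where "fb x = (if x \<in> A then poly (R x) 1 else 0)" for x
  have fbsupp: "{x. fb x \<noteq> 0} \<subseteq> A" unfolding fb_def by auto
  have fbLV: "fb \<in> LV n" unfolding LV_def using fbsupp finA APn finite_subset by blast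
  have fbI: "fb \<in> Iprime n k r"
  proof -
    have "lpeval n fb zb = 0" if zb: "zb \<in> Zprime n k r" for zb
    proof -
      obtain z where zK: "z \<in> Zkr n k r (tK N k r) (qK N k r)" and mz: "\<forall>l<n. monoK (z l) (zb l)"
        using lift[OF r zb] by blast
      have "lpeval n f z = 0" using f zK unfolding Ikr_def by blast
      then have "0 = c * (\<Sum>x\<in>A. f x * (\<Prod>i<n. z i powi x i))" unfolding lpeval_def A_def by simp
      also have "\<dots> = (\<Sum>x\<in>A. Fract (R x) 1 * (\<Prod>i<n. z i powi x i))"
        by (simp add: sum_distrib_left cf mult.assoc[symmetric])
      finally have e0: "(\<Sum>x\<in>A. Fract (R x) 1 * (\<Prod>i<n. z i powi x i)) = 0" by simp
      have "specK (\<Sum>x\<in>A. Fract (R x) 1 * (\<Prod>i<n. z i powi x i)) (\<Sum>x\<in>A. poly (R x) 1 * (\<Prod>i<n. zb i powi x i))"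
        using finA by (intro specK_sum specK_mult specK_const monoK_spec monoK_prod monoK_powi) (auto simp: mz)
      then have "(\<Sum>x\<in>A. poly (R x) 1 * (\<Prod>i<n. zb i powi x i)) = 0" using e0 specK_eq0 by simp
      moreover have "lpeval n fb zb = (\<Sum>x\<in>A. fb x * (\<Prod>i<n. zb i powi x i))"
        by (rule lpeval_superset[OF finA fbsupp])
      moreover have "\<dots> = (\<Sum>x\<in>A. poly (R x) 1 * (\<Prod>i<n. zb i powi x i))"
        unfolding fb_def by simp
      ultimately show ?thesis by simp
    qed
    then show ?thesis unfolding Iprime_def using fbLV by blast
  qed
  have fbnb: "x \<notin> Bkr n k r" if "fb x \<noteq> 0" for x
    using that fbsupp nb unfolding A_def by blast
  have "fb = (\<lambda>x. 0)" by (rule inj_C[OF r k fbI fbnb])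
  then have "fb x0 = 0" by simp
  then show False using Rx0 x0A unfolding fb_def by simp
qed

theorem corollary5p1:
  fixes n k r M N :: nat
  assumes "n \<ge> 2" and "1 \<le> k" and "k \<le> n - 1" and "r \<ge> 2" and "N \<ge> 1"
  shows "fdim (Iprime n k r \<inter> VM n M) \<le> card (BkrM n k r M)
       \<and> fdim (Ikr N n k r \<inter> VM n M) \<le> card (BkrM n k r M)"
proof
  have finB: "finite (BkrM n k r M)" unfolding BkrM_def using finite_PM by blast
  have IS: "Iprime n k r \<inter> VM n M = {f \<in> LV n. \<forall>z\<in>Zprime n k r. lpeval n f z = 0} \<inter> VM n M"
    unfolding Iprime_def ..
  note cl1 = van_closed[where Z = "Zprime n k r" and n = n and M = M, folded IS]
  show "fdim (Iprime n k r \<inter> VM n M) \<le> card (BkrM n k r M)"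
  proof (rule fdim_bound[OF cl1 _ finB])
    fix f assume fS: "f \<in> Iprime n k r \<inter> VM n M" and z: "\<forall>l\<in>BkrM n k r M. f l = 0"
    have "x \<notin> Bkr n k r" if "f x \<noteq> 0" for x
    proof -
      have "x \<in> PM n M" using fS that unfolding VM_def by auto
      then show ?thesis using z that unfolding BkrM_def by auto
    qed
    then show "f = (\<lambda>x. 0)" using inj_C[OF assms(4) assms(2)] fS by blast
  qed
  have IK: "Ikr N n k r \<inter> VM n M = {f \<in> LV n. \<forall>z\<in>Zkr n k r (tK N k r) (qK N k r). lpeval n f z = 0} \<inter> VM n M"
    unfolding Ikr_def ..
  note cl2 = van_closed[where Z = "Zkr n k r (tK N k r) (qK N k r)" and n = n and M = M, folded IK]
  show "fdim (Ikr N n k r \<inter> VM n M) \<le> card (BkrM n k r M)"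
  proof (rule fdim_bound[OF cl2 _ finB])
    fix f assume fS: "f \<in> Ikr N n k r \<inter> VM n M" and z: "\<forall>l\<in>BkrM n k r M. f l = 0"
    have "x \<notin> Bkr n k r" if "f x \<noteq> 0" for x
    proof -
      have "x \<in> PM n M" using fS that unfolding VM_def by auto
      then show ?thesis using z that unfolding BkrM_def by auto
    qed
    then show "f = (\<lambda>x. 0)" using inj_K[OF assms(4) assms(2)] fS by blast
  qed
qed


end
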